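(* Let $T$ be a chain all of whose entries lie in $\{1,2\}$, which contains the chain $[212]$, and which is not equal to $[212]$ itself. Then $\mathcal{Z}(T)\le\tfrac13$.
   Context: A chain is a finite sequence $T=[a_1a_2\dots a_n]$ of positive integers ($n\ge1$). For a chain $S=[s_1\dots s_m]$ write $\rho_S=[0;s_1,\dots,s_m]$ (with $\rho_\emptyset=0$ for the empty chain), and $[s_1;s_2,\dots,s_m]$ for the finite continued fraction, which equals $1/\rho_S$. Define $\mathcal{Z}(T)=\big(\max_{1\le i\le n}([a_i;a_{i+1},\dots,a_n]+[0;a_{i-1},\dots,a_1])\big)^{-1}$, where for $i=1$ the second summand is $0$. A chain contains the chain $[c_1\dots c_k]$ if it has consecutive entries $c_1,\dots,c_k$. *)

theory Defs
  imports Complex_Main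
begin

text \<open>Chains are lists of positive integers (as natural numbers).
  rho S = [0; s_1, ..., s_m], with rho [] = 0.\<close>

fun rho :: "nat list \<Rightarrow> real" where
  "rho [] = 0"
| "rho (s # ss) = 1 / (real s + rho ss)"

fun cf :: "nat list \<Rightarrow> real" where
  "cf [] = 0"
| "cf (s # ss) = real s + rho ss"

definition is_chain :: "nat list \<Rightarrow> bool" where
  "is_chain T \<longleftrightarrow> T \<noteq> [] \<and> (\<forall>a\<in>set T. 0 < a)"

text \<open>For 1-based index i, the term [a_i; a_{i+1},...,a_n] + [0; a_{i-1},...,a_1].
  With 0-based k = i - 1: cf (drop k T) + rho (rev (take k T)).\<close>
definition Zval :: "nat list \<Rightarrow> real" where
  "Zval T = inverse (Max {cf (drop k T) + rho (rev (take k T)) | k. k < length T})"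

definition contains :: "nat list \<Rightarrow> nat list \<Rightarrow> bool" where
  "contains T C \<longleftrightarrow> (\<exists>u v. T = u @ C @ v)"

end

theory Submission
  imports Defs
begin

lemma rho_bounds: "\<forall>a\<in>set w. a \<in> {1, 2::nat} \<Longrightarrow> 0 \<le> rho w \<and> rho w \<le> 1"
proof (induction w)
  case Nil then show ?case by simp
next
  case (Cons a w)
  then have h: "0 \<le> rho w" "real a \<ge> 1" by auto
  then have "real a + rho w \<ge> 1" by linarith
  then show ?case by (simp add: field_simps)
qed

lemma rho_lower: assumes "w \<noteq> []" "\<forall>a\<in>set w. a \<in> {1, 2::nat}" shows "rho w \<ge> 1/3"
proof (cases w)
  case Nil
  then show ?thesis using assms by simp
next
  case (Cons a w')
  note assms(2)
  then have h: "0 \<le> rho w'" "rho w' \<le> 1" "real a \<ge> 1" "real a \<le> 2"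
    using rho_bounds[of w'] Cons by auto
  then have "real a + rho w' \<le> 3" "real a + rho w' > 0" by linarith+
  then show ?thesis using Cons by (simp add: field_simps)
qed

lemma rho2: "\<forall>a\<in>set w. a \<in> {1, 2::nat} \<Longrightarrow> 1 / (1 + rho (2 # w)) \<ge> 2/3"
proof -
  assume a: "\<forall>a\<in>set w. a \<in> {1, 2::nat}"
  then have "0 \<le> rho w" using rho_bounds by blast
  then have r: "rho (2 # w) \<le> 1/2" "rho (2 # w) \<ge> 0" by (simp_all add: field_simps)
  define y where "y = rho (2 # w)"
  have "y \<le> 1/2" "y \<ge> 0" using r y_def by auto
  then have "1 / (1 + y) \<ge> 2/3" by (simp add: field_simps)
  then show ?thesis using y_def by simp
qed

theorem lemma3p2:
  fixes T :: "nat list"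
  assumes "is_chain T"
    and "\<forall>a\<in>set T. a \<in> {1, 2}"
    and "contains T [2, 1, 2]"
    and "T \<noteq> [2, 1, 2]"
  shows "Zval T \<le> 1 / 3"
proof -
  obtain u v where T: "T = u @ [2,1,2] @ v" using assms(3) unfolding contains_def by blast
  have su: "\<forall>a\<in>set u. a \<in> {1, 2::nat}" and sv: "\<forall>a\<in>set v. a \<in> {1, 2::nat}"
    using assms(2) T by auto
  have sru: "\<forall>a\<in>set (rev u). a \<in> {1, 2::nat}" using su by simp
  define S where "S = {cf (drop k T) + rho (rev (take k T)) | k. k < length T}"
  have fin: "finite S" unfolding S_def by simp
  have "\<exists>k < length T. cf (drop k T) + rho (rev (take k T)) \<ge> 3"
  proof (cases "v = []")
    case True
    then have "u \<noteq> []" using assms(4) T by auto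
    have d: "drop (length u) T = [2,1,2]" "take (length u) T = u" using T True by auto
    have "cf (drop (length u) T) = 2 + 1 / (1 + rho (2 # []))" using d by simp
    moreover have "1 / (1 + rho (2 # [])) \<ge> 2/3" using rho2[of "[]"] by simp
    moreover have "rho (rev u) \<ge> 1/3" using rho_lower[OF _ sru] \<open>u \<noteq> []\<close> by simp
    ultimately show ?thesis using d T by (intro exI[of _ "length u"]) auto
  next
    case False
    have d: "drop (length u + 2) T = 2 # v" "take (length u + 2) T = u @ [2,1]" using T by auto
    have "cf (drop (length u + 2) T) = 2 + rho v" using d by simp
    moreover have "rho v \<ge> 1/3" using rho_lower[OF False sv] .
    moreover have "rho (rev (take (length u + 2) T)) = 1 / (1 + rho (2 # rev u))"
      using d by simp
    moreover have "1 / (1 + rho (2 # rev u)) \<ge> 2/3" using rho2[OF sru] .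
    ultimately show ?thesis using T by (intro exI[of _ "length u + 2"]) auto
  qed
  then obtain x where x: "x \<in> S" "x \<ge> 3" unfolding S_def by blast
  have "Max S \<ge> 3" using Max_ge[OF fin x(1)] x(2) by linarith
  then have "inverse (Max S) \<le> 1/3"
    by (simp add: inverse_eq_divide field_simps)
  then show ?thesis unfolding Zval_def S_def .
qed

end
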